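(* For each $n\ge 0$ let $\mathbb{Z}_n$ be a $1$-Gray code for $\mathcal{Z}_n$ whose first word is $0(001)^\star$ and whose last word is $(001)^\star$. Define $\mathbb{W}^1_0$ as the list containing only the empty word, and for $n\ge1$, $\mathbb{W}^1_n=1\cdot\mathbb{W}^1_{n-1}\circ\mathbb{Z}_n$. Then for any $n\ge 1$, $\mathbb{W}^1_n$ is a $1$-Gray code for $\mathcal{W}^1_n$ whose first word is $1^n$ and whose last word is $(001)^\star$.
   Context: A binary word is $1$-decreasing if for every maximal run of $0$s, of length $a>0$, together with the (possibly empty) maximal run of $1$s immediately following it, of length $b$, one has $a>b$. $\mathcal{W}^1_n$ is the set of $1$-decreasing binary words of length $n$. For $n\ge1$, $\mathcal{Z}_n$ is the set of words in $\mathcal{W}^1_n$ starting with $0$; $\mathcal{Z}_0=\{\epsilon\}$. A $1$-Gray code for a set $\mathcal{A}$ of equal-length words is an ordered list of all elements of $\mathcal{A}$, each once, in which consecutive words differ in at most one position. For a list $\mathbb{L}$ and a word $w$, $w\cdot\mathbb{L}$ is the list obtained by prefixing $w$ to every word of $\mathbb{L}$; $\mathbb{L}_1\circ\mathbb{L}_2$ is the concatenation of lists. In a word of prescribed length $n$ written $u(001)^\star$, $(001)^\star$ denotes the prefix of $001001\cdots$ of the length needed to reach total length $n$. *)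

theory Defs
  imports Main
begin

text \<open>Binary words are bool lists: False = 0, True = 1.\<close>

definition one_decreasing :: "bool list \<Rightarrow> bool" where
  "one_decreasing w \<longleftrightarrow>
     (\<forall>i j k. i < j \<and> j \<le> k \<and> k \<le> length w
        \<and> (\<forall>p\<in>{i..<j}. \<not> w ! p)
        \<and> (i = 0 \<or> w ! (i - 1))
        \<and> (j = length w \<or> w ! j)
        \<and> (\<forall>p\<in>{j..<k}. w ! p)
        \<and> (k = length w \<or> \<not> w ! k)
        \<longrightarrow> k - j < j - i)"

definition W1 :: "nat \<Rightarrow> bool list set" where
  "W1 n = {w. length w = n \<and> one_decreasing w}"

definition Zset :: "nat \<Rightarrow> bool list set" where
  "Zset n = (if n = 0 then {[]} else {w \<in> W1 n. hd w = False})"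

definition hamming :: "bool list \<Rightarrow> bool list \<Rightarrow> nat" where
  "hamming u v = card {p. p < length u \<and> p < length v \<and> u ! p \<noteq> v ! p}"

definition gray1 :: "bool list set \<Rightarrow> bool list list \<Rightarrow> bool" where
  "gray1 A L \<longleftrightarrow> distinct L \<and> set L = A
     \<and> (\<forall>i. Suc i < length L \<longrightarrow> hamming (L ! i) (L ! Suc i) \<le> 1)"

text \<open>(001)^* of length n, and 0(001)^* of length n\<close>
definition pat001 :: "nat \<Rightarrow> bool list" where
  "pat001 n = map (\<lambda>i. i mod 3 = 2) [0..<n]"

definition zpat001 :: "nat \<Rightarrow> bool list" where
  "zpat001 n = take n (False # pat001 n)"

fun Wlist :: "(nat \<Rightarrow> bool list list) \<Rightarrow> nat \<Rightarrow> bool list list" where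
  "Wlist Zs 0 = [[]]"
| "Wlist Zs (Suc n) = map ((#) True) (Wlist Zs n) @ Zs (Suc n)"

end

theory Submission
  imports Defs
begin

lemma od_cons_True: "one_decreasing (True # w) \<longleftrightarrow> one_decreasing w"
proof
  assume A: "one_decreasing (True # w)"
  show "one_decreasing w"
    unfolding one_decreasing_def
  proof (intro allI impI)
    fix i j k assume H: "i < j \<and> j \<le> k \<and> k \<le> length w
        \<and> (\<forall>p\<in>{i..<j}. \<not> w ! p)
        \<and> (i = 0 \<or> w ! (i - 1))
        \<and> (j = length w \<or> w ! j)
        \<and> (\<forall>p\<in>{j..<k}. w ! p)
        \<and> (k = length w \<or> \<not> w ! k)"
    have "Suc i < Suc j \<and> Suc j \<le> Suc k \<and> Suc k \<le> length (True # w)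
        \<and> (\<forall>p\<in>{Suc i..<Suc j}. \<not> (True#w) ! p)
        \<and> (Suc i = 0 \<or> (True#w) ! (Suc i - 1))
        \<and> (Suc j = length (True#w) \<or> (True#w) ! Suc j)
        \<and> (\<forall>p\<in>{Suc j..<Suc k}. (True#w) ! p)
        \<and> (Suc k = length (True#w) \<or> \<not> (True#w) ! Suc k)"
    proof -
      from H have h1: "i < j" and h2: "j \<le> k" and h3: "k \<le> length w"
        and h4: "\<forall>p\<in>{i..<j}. \<not> w ! p"
        and h5: "i = 0 \<or> w ! (i - 1)"
        and h6: "j = length w \<or> w ! j"
        and h7: "\<forall>p\<in>{j..<k}. w ! p"
        and h8: "k = length w \<or> \<not> w ! k"
        by blast+
      have g4: "\<forall>p\<in>{Suc i..<Suc j}. \<not> (True#w) ! p"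
      proof
        fix p assume p: "p \<in> {Suc i..<Suc j}"
        then obtain q where q: "p = Suc q" by (cases p) auto
        then have "q \<in> {i..<j}" using p by simp
        then show "\<not> (True#w) ! p" using h4 q by simp
      qed
      have g7: "\<forall>p\<in>{Suc j..<Suc k}. (True#w) ! p"
      proof
        fix p assume p: "p \<in> {Suc j..<Suc k}"
        then obtain q where q: "p = Suc q" by (cases p) auto
        then have "q \<in> {j..<k}" using p by simp
        then show "(True#w) ! p" using h7 q by simp
      qed
      have g5: "Suc i = 0 \<or> (True#w) ! (Suc i - 1)"
        using h5 by (cases i) simp_all
      have g6: "Suc j = length (True#w) \<or> (True#w) ! Suc j" using h6 by simp
      have g8: "Suc k = length (True#w) \<or> \<not> (True#w) ! Suc k" using h8 by simp
      show ?thesis using h1 h2 h3 g4 g5 g6 g7 g8 by simp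
    qed
    note A[unfolded one_decreasing_def, rule_format, OF this]
    then have "Suc k - Suc j < Suc j - Suc i" .
    then show "k - j < j - i" by simp
  qed
next
  assume A: "one_decreasing w"
  show "one_decreasing (True # w)"
    unfolding one_decreasing_def
  proof (intro allI impI)
    fix i j k assume H: "i < j \<and> j \<le> k \<and> k \<le> length (True#w)
        \<and> (\<forall>p\<in>{i..<j}. \<not> (True#w) ! p)
        \<and> (i = 0 \<or> (True#w) ! (i - 1))
        \<and> (j = length (True#w) \<or> (True#w) ! j)
        \<and> (\<forall>p\<in>{j..<k}. (True#w) ! p)
        \<and> (k = length (True#w) \<or> \<not> (True#w) ! k)"
    from H[unfolded length_Cons] have h1: "i < j" and h2: "j \<le> k" and h3: "k \<le> Suc (length w)"
      and h4: "\<forall>p\<in>{i..<j}. \<not> (True#w) ! p"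
      and h5: "i = 0 \<or> (True#w) ! (i - 1)"
      and h6: "j = Suc (length w) \<or> (True#w) ! j"
      and h7: "\<forall>p\<in>{j..<k}. (True#w) ! p"
      and h8: "k = Suc (length w) \<or> \<not> (True#w) ! k"
      by blast+
    have "i \<noteq> 0"
    proof
      assume "i = 0"
      then have "0 \<in> {i..<j}" using h1 by simp
      then have "\<not> (True#w) ! 0" using h4 by blast
      then show False by simp
    qed
    then obtain i' where i': "i = Suc i'" by (cases i) auto
    obtain j' where j': "j = Suc j'" using h1 i' by (cases j) auto
    obtain k' where k': "k = Suc k'" using h2 j' by (cases k) auto
    have "i' < j' \<and> j' \<le> k' \<and> k' \<le> length w
        \<and> (\<forall>p\<in>{i'..<j'}. \<not> w ! p)
        \<and> (i' = 0 \<or> w ! (i' - 1))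
        \<and> (j' = length w \<or> w ! j')
        \<and> (\<forall>p\<in>{j'..<k'}. w ! p)
        \<and> (k' = length w \<or> \<not> w ! k')"
    proof (intro conjI)
      show "\<forall>p\<in>{i'..<j'}. \<not> w ! p"
      proof
        fix p assume "p \<in> {i'..<j'}"
        then have "Suc p \<in> {i..<j}" using i' j' by simp
        then have "\<not> (True#w) ! Suc p" using h4 by blast
        then show "\<not> w ! p" by simp
      qed
      show "\<forall>p\<in>{j'..<k'}. w ! p"
      proof
        fix p assume "p \<in> {j'..<k'}"
        then have "Suc p \<in> {j..<k}" using k' j' by simp
        then have "(True#w) ! Suc p" using h7 by blast
        then show "w ! p" by simp
      qed
      show "i' = 0 \<or> w ! (i' - 1)"
        using h5 i' by (cases i') simp_all
      show "i' < j'" using h1 i' j' by simp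
      show "j' \<le> k'" using h2 k' j' by simp
      show "k' \<le> length w" using h3 k' by simp
      show "j' = length w \<or> w ! j'" using h6 j' by simp
      show "k' = length w \<or> \<not> w ! k'" using h8 k' by simp
    qed
    note A[unfolded one_decreasing_def, rule_format, OF this]
    then have "k' - j' < j' - i'" .
    then show "k - j < j - i" using i' j' k' by simp
  qed
qed

lemma od_replicate_False: "one_decreasing (replicate n False)"
  unfolding one_decreasing_def
proof (intro allI impI)
  fix i j k assume H: "i < j \<and> j \<le> k \<and> k \<le> length (replicate n False)
        \<and> (\<forall>p\<in>{i..<j}. \<not> (replicate n False) ! p)
        \<and> (i = 0 \<or> (replicate n False) ! (i - 1))
        \<and> (j = length (replicate n False) \<or> (replicate n False) ! j)
        \<and> (\<forall>p\<in>{j..<k}. (replicate n False) ! p)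
        \<and> (k = length (replicate n False) \<or> \<not> (replicate n False) ! k)"
  from H have h1: "i < j" and h2: "j \<le> k" and h3: "k \<le> n"
    and h6: "j = n \<or> (replicate n False) ! j" by simp_all
  have "j = n"
  proof (rule ccontr)
    assume "j \<noteq> n"
    then have "j < n" using h2 h3 by simp
    then have "\<not> replicate n False ! j" by simp
    then show False using h6 \<open>j \<noteq> n\<close> by blast
  qed
  then have "k = j" using h2 h3 by simp
  then show "k - j < j - i" using h1 by simp
qed

lemma hamming_Cons:
  "hamming (x # a) (y # b) = (if x = y then 0 else 1) + hamming a b"
proof -
  let ?S = "{p. p < length a \<and> p < length b \<and> a ! p \<noteq> b ! p}"
  have e: "{p. p < length (x#a) \<and> p < length (y#b) \<and> (x#a) ! p \<noteq> (y#b) ! p}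
      = (if x = y then {} else {0}) \<union> Suc ` ?S" (is "?L = ?R")
  proof (rule set_eqI)
    fix p show "p \<in> ?L \<longleftrightarrow> p \<in> ?R"
    proof (cases p)
      case 0 then show ?thesis by auto
    next
      case (Suc q)
      have "Suc q \<in> Suc ` ?S \<longleftrightarrow> q \<in> ?S" by (rule inj_image_mem_iff) simp
      then show ?thesis using Suc by simp
    qed
  qed
  have fin: "finite ?S" by simp
  have "0 \<notin> Suc ` ?S" by auto
  then have "card ?R = (if x = y then 0 else 1) + card (Suc ` ?S)"
    using fin by (simp add: card_insert_if)
  also have "card (Suc ` ?S) = card ?S" by (simp add: card_image)
  finally show ?thesis unfolding hamming_def e .
qed

lemma hamming_TT: "hamming (True # a) (True # b) = hamming a b"
  by (simp add: hamming_Cons)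

lemma hamming_TF: "hamming (True # a) (False # a) = 1"
proof -
  have "hamming a a = 0" unfolding hamming_def by simp
  then show ?thesis by (simp add: hamming_Cons)
qed

lemma W1_Suc: "W1 (Suc n) = (#) True ` W1 n \<union> Zset (Suc n)"
proof
  show "W1 (Suc n) \<subseteq> (#) True ` W1 n \<union> Zset (Suc n)"
  proof
    fix w assume w: "w \<in> W1 (Suc n)"
    then have lw: "length w = Suc n" and ow: "one_decreasing w" unfolding W1_def by simp_all
    then obtain b v where bv: "w = b # v" by (cases w) auto
    show "w \<in> (#) True ` W1 n \<union> Zset (Suc n)"
    proof (cases b)
      case True
      then have "one_decreasing v" using ow bv od_cons_True by simp
      then have "v \<in> W1 n" using lw bv unfolding W1_def by simp
      then show ?thesis using bv True by blast
    next
      case False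
      then have "w \<in> Zset (Suc n)" using w bv unfolding Zset_def by simp
      then show ?thesis by blast
    qed
  qed
  show "(#) True ` W1 n \<union> Zset (Suc n) \<subseteq> W1 (Suc n)"
  proof
    fix w assume "w \<in> (#) True ` W1 n \<union> Zset (Suc n)"
    then show "w \<in> W1 (Suc n)"
    proof
      assume "w \<in> (#) True ` W1 n"
      then obtain v where "v \<in> W1 n" "w = True # v" by blast
      then show ?thesis unfolding W1_def using od_cons_True by simp
    next
      assume "w \<in> Zset (Suc n)"
      then show ?thesis unfolding Zset_def by simp
    qed
  qed
qed

lemma zpat_Suc: "zpat001 (Suc n) = False # pat001 n"
  unfolding zpat001_def pat001_def by (simp add: take_map)

theorem theorem4:
  fixes Zs :: "nat \<Rightarrow> bool list list"
  assumes "\<And>n. gray1 (Zset n) (Zs n)"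
    and "\<And>n. hd (Zs n) = zpat001 n"
    and "\<And>n. last (Zs n) = pat001 n"
    and "n \<ge> 1"
  shows "gray1 (W1 n) (Wlist Zs n) \<and> hd (Wlist Zs n) = replicate n True
         \<and> last (Wlist Zs n) = pat001 n"
proof -
  have G: "gray1 (Zset n) (Zs n)" for n using assms(1) .
  have "gray1 (W1 m) (Wlist Zs m) \<and> hd (Wlist Zs m) = replicate m True
         \<and> last (Wlist Zs m) = pat001 m \<and> Wlist Zs m \<noteq> []" for m
  proof (induction m)
    case 0
    have "W1 0 = {[]}" unfolding W1_def one_decreasing_def by auto
    then show ?case unfolding gray1_def pat001_def by simp
  next
    case (Suc m)
    let ?A = "map ((#) True) (Wlist Zs m)"
    let ?B = "Zs (Suc m)"
    have ne: "?B \<noteq> []"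
    proof
      assume "?B = []"
      then have "Zset (Suc m) = {}" using G[of "Suc m"] unfolding gray1_def by auto
      moreover have "replicate (Suc m) False \<in> Zset (Suc m)"
        unfolding Zset_def W1_def using od_replicate_False[of "Suc m"] by (simp del: replicate_Suc)
      ultimately show False by auto
    qed
    have gA: "gray1 (W1 m) (Wlist Zs m)" using Suc.IH by blast
    have gB: "gray1 (Zset (Suc m)) ?B" using G .
    have dA: "distinct ?A" using gA unfolding gray1_def by (simp add: distinct_map)
    have disj: "set ?A \<inter> set ?B = {}"
      using gB unfolding gray1_def Zset_def by auto
    have setEq: "set (?A @ ?B) = W1 (Suc m)"
      using gA gB unfolding gray1_def by (simp add: W1_Suc)
    have adj: "hamming ((?A @ ?B) ! i) ((?A @ ?B) ! Suc i) \<le> 1" if "Suc i < length (?A @ ?B)" for i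
    proof -
      consider "Suc i < length ?A" | "Suc i = length ?A" | "Suc i > length ?A" by linarith
      then show ?thesis
      proof cases
        case 1
        then show ?thesis using gA unfolding gray1_def by (simp add: nth_append hamming_TT)
      next
        case 2
        have "(?A @ ?B) ! i = last ?A"
        proof -
          have L: "length (Wlist Zs m) = Suc i" using 2 by simp
          show ?thesis using L Suc.IH by (simp add: nth_append last_conv_nth)
        qed
        also have "\<dots> = True # pat001 m" using Suc.IH by (simp add: last_map)
        finally have e1: "(?A @ ?B) ! i = True # pat001 m" .
        have "(?A @ ?B) ! Suc i = hd ?B" using 2 ne by (simp add: nth_append hd_conv_nth)
        also have "\<dots> = False # pat001 m" using assms(2) zpat_Suc by simp
        finally show ?thesis using e1 hamming_TF by simp
      next
        case 3
        then show ?thesis using gB that unfolding gray1_def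
          by (simp add: nth_append Suc_diff_le)
      qed
    qed
    have "gray1 (W1 (Suc m)) (?A @ ?B)"
      unfolding gray1_def using dA disj gB setEq adj unfolding gray1_def by auto
    moreover have "hd (?A @ ?B) = replicate (Suc m) True"
      using Suc.IH by (simp add: hd_map)
    moreover have "last (?A @ ?B) = pat001 (Suc m)" using ne assms(3) by simp
    ultimately show ?case using ne by simp
  qed
  then show ?thesis by blast
qed

end
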